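(* Let $i_0\ge1$ be an integer and $f:[p_{i_0},+\infty)\to\mathbb R$ an increasing function such that $p_{i+1}\le p_i+f(p_{i+1})$ for all $i\ge i_0$. Let $k\ge1$ and $x\ge p_{i_0+k-1}$. If $t\mapsto f(t)/t$ is decreasing for $t\ge x$, then \[ \eta_k(x)\ge 1-k\frac{f(x)}{x}. \]
   Context: $p_i$ denotes the $i$-th prime. For $x\ge p_k$, $\eta_k(x)=\min\{p_{i-k}/p_i:\ p_i>x\}$. *)

theory Defs
  imports Complex_Main "HOL-Computational_Algebra.Primes" "HOL-Library.Infinite_Set"
begin

text \<open>p i is the i-th prime, 1-indexed: p 1 = 2, p 2 = 3, ...\<close>
definition p :: "nat \<Rightarrow> nat" where
  "p i = enumerate {q::nat. prime q} (i - 1)"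

definition eta :: "nat \<Rightarrow> real \<Rightarrow> real" where
  "eta k x = Inf {real (p (i - k)) / real (p i) | i. i \<ge> 1 \<and> real (p i) > x}"

end

theory Submission
  imports Defs
begin

lemma inf_pr: "infinite {q::nat. prime q}" using primes_infinite by blast

lemma p_prime: "prime (p i)"
  unfolding p_def using enumerate_in_set[OF inf_pr] by blast

lemma p_pos: "real (p i) > 0"
  using p_prime prime_gt_0_nat by simp

lemma p_mono: "i \<le> j \<Longrightarrow> p i \<le> p j"
  unfolding p_def using inf_pr by (simp add: diff_le_mono)

lemma p_less_imp: "p i < p j \<Longrightarrow> i < j"
  using p_mono by (meson leD leI)

lemma chain:
  assumes mono: "mono_on {real (p i0)..} f"
    and step: "\<And>i. i \<ge> i0 \<Longrightarrow> real (p (i + 1)) \<le> real (p i) + f (real (p (i + 1)))"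
    and j: "j \<ge> i0"
  shows "real (p (j + n)) - real (p j) \<le> real n * f (real (p (j + n)))"
proof (induction n)
  case 0 then show ?case by simp
next
  case (Suc n)
  have s: "real (p (j + n + 1)) \<le> real (p (j+n)) + f (real (p (j + n + 1)))"
    using step[of "j+n"] j by simp
  have a: "real (p i0) \<le> real (p (j+n))" using p_mono j by simp
  have b: "real (p (j+n)) \<le> real (p (j+n+1))" using p_mono by simp
  have "f (real (p (j+n))) \<le> f (real (p (j+n+1)))"
    using mono a b by (intro mono_onD[OF mono]) auto
  hence "real n * f (real (p (j+n))) \<le> real n * f (real (p (j+n+1)))"
    by (simp add: mult_left_mono)
  with Suc s show ?case by (simp add: algebra_simps)
qed

theorem mainTheorem12:
  fixes i0 k :: nat and f :: "real \<Rightarrow> real" and x :: real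
  assumes "i0 \<ge> 1"
    and "mono_on {real (p i0)..} f"
    and "\<And>i. i \<ge> i0 \<Longrightarrow> real (p (i + 1)) \<le> real (p i) + f (real (p (i + 1)))"
    and "k \<ge> 1"
    and "x \<ge> real (p (i0 + k - 1))"
    and "antimono_on {x..} (\<lambda>t. f t / t)"
  shows "eta k x \<ge> 1 - real k * f x / x"
  unfolding eta_def
proof (rule cInf_greatest)
  have "\<exists>q::nat. prime q \<and> real q > x"
  proof -
    obtain q :: nat where "prime q" "q > nat \<lceil>x\<rceil>" using bigger_prime by blast
    thus ?thesis by (intro exI[of _ q]) linarith
  qed
  then obtain q :: nat where q: "prime q" "real q > x" by blast
  have "q \<in> range (enumerate {q::nat. prime q})"
    using q enumerate_Ex[OF inf_pr] by (metis mem_Collect_eq rangeI)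
  then obtain n where "enumerate {q::nat. prime q} n = q" by blast
  hence "p (n+1) = q" unfolding p_def by simp
  thus "{real (p (i - k)) / real (p i) |i. i \<ge> 1 \<and> real (p i) > x} \<noteq> {}"
  proof -
    have "real (p (n+1-k)) / real (p (n+1)) \<in> {real (p (i - k)) / real (p i) |i. i \<ge> 1 \<and> real (p i) > x}"
      using q \<open>p (n+1) = q\<close> by (intro CollectI exI[of _ "n+1"]) simp
    thus ?thesis by blast
  qed
next
  fix y assume "y \<in> {real (p (i - k)) / real (p i) |i. i \<ge> 1 \<and> real (p i) > x}"
  then obtain i where i: "i \<ge> 1" "real (p i) > x" and y: "y = real (p (i - k)) / real (p i)" by blast
  have "p (i0 + k - 1) < p i" using i assms(5) by linarith
  hence ik: "i0 + k - 1 < i" by (rule p_less_imp)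
  hence j: "i - k \<ge> i0" "i - k + k = i" using assms(4) by auto
  have c: "real (p i) - real (p (i-k)) \<le> real k * f (real (p i))"
    using chain[OF assms(2) assms(3) j(1), of k] j(2) by simp
  have xpos: "x > 0" using assms(5) p_pos[of "i0+k-1"] by linarith
  have pp: "real (p i) > 0" by (rule p_pos)
  have d: "f (real (p i)) / real (p i) \<le> f x / x"
    using assms(6) i(2) unfolding monotone_on_def by simp
  have "1 - y = (real (p i) - real (p (i-k))) / real (p i)" using y pp by (simp add: field_simps)
  also have "\<dots> \<le> real k * f (real (p i)) / real (p i)" using c pp by (simp add: divide_right_mono)
  also have "\<dots> = real k * (f (real (p i)) / real (p i))" by simp
  also have "\<dots> \<le> real k * (f x / x)" using d by (intro mult_left_mono) auto
  finally show "1 - real k * f x / x \<le> y" by (simp add: algebra_simps)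
qed

end
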